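(* Let $s\ge1$, let $q$ be a prime power, let $t\in\mathbb{N}_0$, let $\mathbf{T}:\mathbb{N}_0\to\mathbb{N}_0$ with $\mathbf{T}(m)\le\min(m,t)$ for all $m$, and let $C^{(1)},\ldots,C^{(s)}\in\mathbb{F}_q^{\mathbb{N}\times\mathbb{N}_0}$ be finite-row generating matrices such that for every $m$ with $m>\mathbf{T}(m)$ and all integers $d_1,\ldots,d_s\ge0$ with $1\le d_1+\cdots+d_s\le m-\mathbf{T}(m)$, the vectors $(c^{(i)}_{j,0},\ldots,c^{(i)}_{j,m-1})\in\mathbb{F}_q^m$, $1\le j\le d_i$, $1\le i\le s$, are linearly independent. Let $\alpha\in\mathbb{Z}_q$ and $s_n=n+\alpha$. Then the sequence $\mathcal{S}$ produced by Algorithm 2 with these matrices, the input $(s_n)_{n\ge0}$ and any choice of bijections $\psi_r,\lambda_{i,j}$ is a low-discrepancy sequence, i.e. $ND_N^*(\mathcal{S})=O((\log N)^s)$ for $N\ge2$, with implied constant independent of $N$.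
   Context: $\mathbb{F}_q$ is the finite field with $q$ elements, $D_q=\{0,\ldots,q-1\}$; $\mathbb{Z}_q$ is the ring of $q$-adic integers, each $z\in\mathbb{Z}_q$ having a unique representation $z=\sum_{r\ge0}a_rq^r$, $a_r\in D_q$. A matrix $(c^{(i)}_{j,r})_{j\ge1,r\ge0}$ is finite-row if each row has finitely many nonzero entries. Algorithm 2: choose bijections $\psi_r:D_q\to\mathbb{F}_q$ ($r\ge0$), finite-row matrices $C^{(i)}=(c^{(i)}_{j,r})$, bijections $\lambda_{i,j}:\mathbb{F}_q\to D_q$ and $(s_n)$ in $\mathbb{Z}_q$; with $s_n=\sum_ra_rq^r$ put $x_n^{(i)}=\sum_{j\ge1}\lambda_{i,j}(\sum_rc^{(i)}_{j,r}\psi_r(a_r))q^{-j}$, $\boldsymbol{x}_n=(x_n^{(1)},\ldots,x_n^{(s)})\in[0,1]^s$. Star discrepancy: $D_N^*(\mathcal{S})=\sup_J|A(J)/N-\mathrm{vol}(J)|$, sup over subintervals $J\subseteq[0,1]^s$ with one vertex at the origin, $A(J)=\#\{0\le n<N:\boldsymbol{x}_n\in J\}$. *)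

theory Defs
  imports "HOL-Analysis.Analysis"
begin

text \<open>q-adic integers are represented by their digit sequences
  (a r)_{r>=0} with 0 <= a r < q.\<close>

definition qadic :: "nat \<Rightarrow> (nat \<Rightarrow> nat) \<Rightarrow> bool" where
  "qadic q a \<longleftrightarrow> (\<forall>r. a r < q)"

text \<open>Digits of n + alpha in Z_q: the r-th digit of a sum is determined by
  the sum modulo q^(r+1).\<close>

definition qadic_add_nat :: "nat \<Rightarrow> nat \<Rightarrow> (nat \<Rightarrow> nat) \<Rightarrow> nat \<Rightarrow> nat" where
  "qadic_add_nat q n alpha r = ((n + (\<Sum>k\<le>r. alpha k * q ^ k)) div q ^ r) mod q"

definition finite_row :: "(nat \<Rightarrow> nat \<Rightarrow> 'f::zero) \<Rightarrow> bool" where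
  "finite_row C \<longleftrightarrow> (\<forall>j\<ge>1. finite {r. C j r \<noteq> 0})"

text \<open>Coordinate i of the point produced by Algorithm 2 from the digit sequence a
  of the input s_n.  C i j r is c^{(i)}_{j,r}, psi r is psi_r, lam i j is lambda_{i,j}.\<close>

definition alg2_coord ::
  "(nat \<Rightarrow> nat \<Rightarrow> 'f::field) \<Rightarrow> (nat \<Rightarrow> nat \<Rightarrow> nat \<Rightarrow> 'f) \<Rightarrow> (nat \<Rightarrow> nat \<Rightarrow> 'f \<Rightarrow> nat)
    \<Rightarrow> (nat \<Rightarrow> nat) \<Rightarrow> nat \<Rightarrow> real" where
  "alg2_coord psi C lam a i =
     (\<Sum>j. real (lam i (Suc j) (\<Sum>r\<in>{r. C i (Suc j) r \<noteq> 0}. C i (Suc j) r * psi r (a r)))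
            / real CARD('f) ^ Suc j)"

text \<open>Star discrepancy of the first N points of x (x n i = i-th coordinate of
  the n-th point, i = 1..s), over boxes [0,u_1) x ... x [0,u_s), u in [0,1]^s.\<close>

definition star_discrepancy :: "nat \<Rightarrow> nat \<Rightarrow> (nat \<Rightarrow> nat \<Rightarrow> real) \<Rightarrow> real" where
  "star_discrepancy s N x =
     (SUP u\<in>{u. \<forall>i\<in>{1..s}. 0 \<le> u i \<and> u i \<le> 1}.
        \<bar>real (card {n. n < N \<and> (\<forall>i\<in>{1..s}. x n i < u i)}) / real N - (\<Prod>i=1..s. u i)\<bar>)"

definition rows_lin_indep ::
  "nat \<Rightarrow> (nat \<Rightarrow> nat \<Rightarrow> nat \<Rightarrow> 'f::field) \<Rightarrow> nat \<Rightarrow> (nat \<Rightarrow> nat) \<Rightarrow> bool" where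
  "rows_lin_indep s C m d \<longleftrightarrow>
     (\<forall>e :: nat \<Rightarrow> nat \<Rightarrow> 'f.
        (\<forall>r<m. (\<Sum>i=1..s. \<Sum>j=1..d i. e i j * C i j r) = 0) \<longrightarrow>
        (\<forall>i\<in>{1..s}. \<forall>j\<in>{1..d i}. e i j = 0))"

end

theory Submission
  imports Defs
begin



lemma la_count:
  fixes R :: "'l \<Rightarrow> nat \<Rightarrow> 'f::{finite,field}"
  assumes "finite Rows" "finite Col"
    and "\<forall>e. (\<forall>r\<in>Col. (\<Sum>l\<in>Rows. e l * R l r) = 0) \<longrightarrow> (\<forall>l\<in>Rows. e l = 0)"
  shows "card {v \<in> PiE Col (\<lambda>_. UNIV). \<forall>l\<in>Rows. (\<Sum>r\<in>Col. R l r * v r) = g l}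
         = CARD('f) ^ (card Col - card Rows)"
  using assms
proof (induction Rows arbitrary: Col R g rule: finite_induct)
  case empty
  then show ?case by (simp add: card_PiE)
next
  case (insert l0 Rows)
  have "\<exists>c\<in>Col. R l0 c \<noteq> 0"
  proof (rule ccontr)
    assume "\<not> ?thesis"
    then have "\<forall>r\<in>Col. (\<Sum>l\<in>insert l0 Rows. (\<lambda>l. if l = l0 then 1 else 0) l * R l r) = 0"
      using insert.hyps by (auto intro!: sum.neutral)
    then show False using insert.prems(2)[THEN spec, of "\<lambda>l. if l = l0 then 1 else (0::'f)"] by simp
  qed
  then obtain c where cC: "c \<in> Col" and c0: "R l0 c \<noteq> 0" by blast
  define R' where "R' l r = R l r - R l c / R l0 c * R l0 r" for l r
  define g' where "g' l = g l - R l c / R l0 c * g l0" for l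
  define Col' where "Col' = Col - {c}"
  have R'c: "R' l c = 0" for l using c0 by (simp add: R'_def)
  have fin': "finite Col'" using insert.prems(1) by (simp add: Col'_def)
  have ind': "\<forall>e. (\<forall>r\<in>Col'. (\<Sum>l\<in>Rows. e l * R' l r) = 0) \<longrightarrow> (\<forall>l\<in>Rows. e l = 0)"
  proof (intro allI impI)
    fix e assume h: "\<forall>r\<in>Col'. (\<Sum>l\<in>Rows. e l * R' l r) = 0"
    have h2: "(\<Sum>l\<in>Rows. e l * R' l r) = 0" if "r \<in> Col" for r
      using h that R'c by (cases "r = c") (auto simp: Col'_def)
    define e' where "e' = e(l0 := - (\<Sum>l\<in>Rows. e l * R l c) / R l0 c)"
    have "(\<Sum>l\<in>insert l0 Rows. e' l * R l r) = 0" if "r \<in> Col" for r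
    proof -
      have "(\<Sum>l\<in>insert l0 Rows. e' l * R l r) = e' l0 * R l0 r + (\<Sum>l\<in>Rows. e l * R l r)"
        using insert.hyps by (auto simp: e'_def intro!: sum.cong)
      also have "(\<Sum>l\<in>Rows. e l * R l r) = (\<Sum>l\<in>Rows. e l * R' l r) + (\<Sum>l\<in>Rows. e l * R l c) / R l0 c * R l0 r"
        by (simp add: R'_def algebra_simps sum_subtractf sum_distrib_left sum_distrib_right sum_divide_distrib)
      finally show ?thesis using h2[OF that] by (simp add: e'_def)
    qed
    then have "\<forall>l\<in>insert l0 Rows. e' l = 0" using insert.prems(2) by blast
    then show "\<forall>l\<in>Rows. e l = 0" using insert.hyps by (auto simp: e'_def split: if_splits)
  qed
  have IH: "card {v \<in> PiE Col' (\<lambda>_. UNIV). \<forall>l\<in>Rows. (\<Sum>r\<in>Col'. R' l r * v r) = g' l}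
         = CARD('f) ^ (card Col' - card Rows)"
    using insert.IH[OF fin' ind'] .
  define S where "S = {v \<in> PiE Col (\<lambda>_. UNIV). \<forall>l\<in>insert l0 Rows. (\<Sum>r\<in>Col. R l r * v r) = g l}"
  define S' where "S' = {v \<in> PiE Col' (\<lambda>_. UNIV). \<forall>l\<in>Rows. (\<Sum>r\<in>Col'. R' l r * v r) = g' l}"
  have splitsum: "(\<Sum>r\<in>Col. f r) = f c + (\<Sum>r\<in>Col'. f r)" for f :: "nat \<Rightarrow> 'f"
    using insert.prems(1) cC by (simp add: Col'_def sum.remove)
  define ext where "ext w = w(c := (g l0 - (\<Sum>r\<in>Col'. R l0 r * w r)) / R l0 c)" for w :: "nat \<Rightarrow> 'f"
  have "bij_betw (\<lambda>v. restrict v Col') S S'"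
  proof (rule bij_betw_byWitness[where f' = ext])
    show "\<forall>v\<in>S. ext (restrict v Col') = v"
    proof
      fix v assume v: "v \<in> S"
      have e0: "(\<Sum>r\<in>Col. R l0 r * v r) = g l0" using v by (auto simp: S_def)
      have "v c = (g l0 - (\<Sum>r\<in>Col'. R l0 r * v r)) / R l0 c"
        using e0 c0 splitsum[of "\<lambda>r. R l0 r * v r"] by (simp add: field_simps)
      moreover have "(\<Sum>r\<in>Col'. R l0 r * restrict v Col' r) = (\<Sum>r\<in>Col'. R l0 r * v r)" by simp
      ultimately show "ext (restrict v Col') = v"
        using v by (auto simp: ext_def S_def Col'_def PiE_def extensional_def fun_eq_iff)
    qed
    show "\<forall>w\<in>S'. restrict (ext w) Col' = w"
      by (auto simp: ext_def S'_def Col'_def PiE_def extensional_def fun_eq_iff)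
    show "(\<lambda>v. restrict v Col') ` S \<subseteq> S'"
    proof
      fix w assume "w \<in> (\<lambda>v. restrict v Col') ` S"
      then obtain v where v: "v \<in> S" and w: "w = restrict v Col'" by blast
      have "(\<Sum>r\<in>Col'. R' l r * w r) = g' l" if l: "l \<in> Rows" for l
      proof -
        have "(\<Sum>r\<in>Col'. R' l r * w r) = (\<Sum>r\<in>Col. R' l r * v r)"
          using splitsum[of "\<lambda>r. R' l r * v r"] R'c w by simp
        also have "\<dots> = (\<Sum>r\<in>Col. R l r * v r) - R l c / R l0 c * (\<Sum>r\<in>Col. R l0 r * v r)"
          by (simp add: R'_def algebra_simps sum_subtractf sum_distrib_left)
        also have "\<dots> = g' l" using v l by (auto simp: S_def g'_def)
        finally show ?thesis .
      qed
      then show "w \<in> S'" using w by (auto simp: S'_def)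
    qed
    show "ext ` S' \<subseteq> S"
    proof
      fix v assume "v \<in> ext ` S'"
      then obtain w where w: "w \<in> S'" and v: "v = ext w" by blast
      have wc: "w c = undefined" using w by (auto simp: S'_def Col'_def PiE_def extensional_def)
      have vw: "(\<Sum>r\<in>Col'. f r * v r) = (\<Sum>r\<in>Col'. f r * w r)" for f
        by (rule sum.cong) (auto simp: v ext_def Col'_def)
      have e0: "(\<Sum>r\<in>Col. R l0 r * v r) = g l0"
        using splitsum[of "\<lambda>r. R l0 r * v r"] vw[of "R l0"] c0 by (simp add: v ext_def)
      have "(\<Sum>r\<in>Col. R l r * v r) = g l" if l: "l \<in> Rows" for l
      proof -
        have "(\<Sum>r\<in>Col. R l r * v r) = (\<Sum>r\<in>Col. R' l r * v r) + R l c / R l0 c * (\<Sum>r\<in>Col. R l0 r * v r)"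
          by (simp add: R'_def algebra_simps sum_subtractf sum_distrib_left)
        also have "(\<Sum>r\<in>Col. R' l r * v r) = (\<Sum>r\<in>Col'. R' l r * w r)"
          using splitsum[of "\<lambda>r. R' l r * v r"] R'c vw by simp
        also have "\<dots> = g' l" using w l by (auto simp: S'_def)
        finally show ?thesis using e0 by (simp add: g'_def)
      qed
      moreover have "v \<in> PiE Col (\<lambda>_. UNIV)"
        using w cC by (auto simp: v ext_def S'_def Col'_def PiE_def extensional_def)
      ultimately show "v \<in> S" using e0 by (auto simp: S_def)
    qed
  qed
  then have "card S = card S'" by (rule bij_betw_same_card)
  moreover have "card Col' = card Col - 1" using cC insert.prems(1) by (simp add: Col'_def)
  ultimately show ?case using IH insert.hyps unfolding S_def S'_def by simp
qed




lemma digits_inj: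
  fixes q :: nat
  shows "\<rho> < q ^ m \<Longrightarrow> \<rho>' < q ^ m \<Longrightarrow> (\<forall>r<m. \<rho> div q ^ r mod q = \<rho>' div q ^ r mod q) \<Longrightarrow> \<rho> = \<rho>'"
proof (induction m arbitrary: \<rho> \<rho>')
  case 0 then show ?case by simp
next
  case (Suc m)
  have q0: "q > 0" using Suc.prems(1) by (cases "q = 0") auto
  have "\<rho> div q < q ^ m" "\<rho>' div q < q ^ m" using Suc.prems(1,2) q0
    by (auto simp: div_less_iff_less_mult mult.commute)
  moreover have "\<forall>r<m. \<rho> div q div q ^ r mod q = \<rho>' div q div q ^ r mod q"
  proof (intro allI impI)
    fix r assume "r < m"
    then have "\<rho> div q ^ Suc r mod q = \<rho>' div q ^ Suc r mod q" using Suc.prems(3) by auto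
    then show "\<rho> div q div q ^ r mod q = \<rho>' div q div q ^ r mod q" by (simp add: div_mult2_eq)
  qed
  ultimately have "\<rho> div q = \<rho>' div q" using Suc.IH by blast
  moreover have "\<rho> mod q = \<rho>' mod q" using Suc.prems(3)[rule_format, of 0] by simp
  ultimately show ?case by (metis div_mult_mod_eq)
qed

lemma card_bij_filter:
  assumes "bij_betw f A B"
  shows "card {x\<in>A. P (f x)} = card {y\<in>B. P y}"
proof -
  have "bij_betw f {x\<in>A. P (f x)} {y\<in>B. P y}"
    using assms unfolding bij_betw_def inj_on_def by auto
  then show ?thesis by (rule bij_betw_same_card)
qed

lemma interval_count:
  fixes \<Phi> :: "nat \<Rightarrow> bool" and M Q :: nat
  assumes M: "M > 0" and blk: "\<And>h. card {\<rho>. \<rho> < M \<and> \<Phi> (h*M+\<rho>)} = Q"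
  shows "\<bar>real (card {w. w < b \<and> \<Phi> w}) - real b * Q / M\<bar> \<le> Q"
proof -
  have full: "card {w. w < h*M \<and> \<Phi> w} = h*Q" for h
  proof (induction h)
    case 0 then show ?case by simp
  next
    case (Suc h)
    have "{w. w < Suc h*M \<and> \<Phi> w} = {w. w < h*M \<and> \<Phi> w} \<union> (\<lambda>\<rho>. h*M+\<rho>) ` {\<rho>. \<rho> < M \<and> \<Phi> (h*M+\<rho>)}"
    proof (rule set_eqI, rule iffI)
      fix w assume w: "w \<in> {w. w < Suc h*M \<and> \<Phi> w}"
      show "w \<in> {w. w < h*M \<and> \<Phi> w} \<union> (\<lambda>\<rho>. h*M+\<rho>) ` {\<rho>. \<rho> < M \<and> \<Phi> (h*M+\<rho>)}"
      proof (cases "w < h*M")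
        case True then show ?thesis using w by auto
      next
        case False
        then have "w = h*M + (w - h*M)" "w - h*M < M" using w by auto
        then show ?thesis using w by (auto intro!: image_eqI[of _ _ "w - h*M"])
      qed
    qed auto
    moreover have "card ((\<lambda>\<rho>. h*M+\<rho>) ` {\<rho>. \<rho> < M \<and> \<Phi> (h*M+\<rho>)}) = Q"
      using blk by (subst card_image) (auto simp: inj_on_def)
    moreover have "{w. w < h*M \<and> \<Phi> w} \<inter> (\<lambda>\<rho>. h*M+\<rho>) ` {\<rho>. \<rho> < M \<and> \<Phi> (h*M+\<rho>)} = {}" by auto
    moreover have "finite {w. w < h*M \<and> \<Phi> w}" by auto
    moreover have "finite ((\<lambda>\<rho>. h*M+\<rho>) ` {\<rho>. \<rho> < M \<and> \<Phi> (h*M+\<rho>)})" by auto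
    ultimately show ?case using Suc.IH by (simp add: card_Un_disjoint)
  qed
  define h where "h = b div M"
  have hb: "h*M \<le> b" "b < Suc h * M" using M by (auto simp: h_def dividend_less_div_times)
  have "card {w. w < h*M \<and> \<Phi> w} \<le> card {w. w < b \<and> \<Phi> w}"
    using hb by (intro card_mono) auto
  moreover have "card {w. w < b \<and> \<Phi> w} \<le> card {w. w < Suc h*M \<and> \<Phi> w}"
    using hb by (intro card_mono) auto
  ultimately have c1: "h*Q \<le> card {w. w < b \<and> \<Phi> w}" "card {w. w < b \<and> \<Phi> w} \<le> Suc h * Q"
    using full by metis+
  have hM1: "real h * real M \<le> real b" using hb(1) by (metis of_nat_le_iff of_nat_mult)
  have hM2: "real b \<le> real (Suc h) * real M" using hb(2) by (metis less_imp_le of_nat_le_iff of_nat_mult)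
  have Mp: "real M > 0" using M by simp
  have "real h * Q * M \<le> real b * Q" using mult_right_mono[OF hM1, of "real Q"] by (simp add: algebra_simps)
  then have "real h * Q \<le> real b * Q / M" using Mp by (simp add: pos_le_divide_eq)
  moreover have "real b * Q / M \<le> real (Suc h) * Q"
  proof -
    have "real b * Q \<le> real (Suc h) * Q * M" using mult_right_mono[OF hM2, of "real Q"] by (simp add: algebra_simps)
    then show ?thesis using Mp by (simp add: pos_divide_le_eq)
  qed
  moreover have "real (h*Q) \<le> real (card {w. w < b \<and> \<Phi> w})" "real (card {w. w < b \<and> \<Phi> w}) \<le> real (Suc h * Q)"
    using c1 by linarith+
  ultimately show ?thesis by (simp add: abs_le_iff algebra_simps)
qed




lemma inj_card_bij:
  assumes "inj_on f A" "f ` A \<subseteq> B" "finite B" "card A = card B"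
  shows "bij_betw f A B"
proof -
  have "card (f ` A) = card B" using assms by (simp add: card_image)
  then have "f ` A = B" using assms by (intro card_subset_eq) auto
  then show ?thesis using assms unfolding bij_betw_def by auto
qed

locale alg2_setup =
  fixes s t :: nat
    and T :: "nat \<Rightarrow> nat"
    and C :: "nat \<Rightarrow> nat \<Rightarrow> nat \<Rightarrow> 'f::{finite,field}"
    and alpha :: "nat \<Rightarrow> nat"
    and psi :: "nat \<Rightarrow> nat \<Rightarrow> 'f"
    and lam :: "nat \<Rightarrow> nat \<Rightarrow> 'f \<Rightarrow> nat"
  assumes s1: "s \<ge> 1"
    and Tle: "\<And>m. T m \<le> min m t"
    and fr: "\<And>i. i \<in> {1..s} \<Longrightarrow> finite_row (C i)"
    and indep: "\<And>m d. m > T m \<Longrightarrow> 1 \<le> (\<Sum>i=1..s. d i) \<Longrightarrow> (\<Sum>i=1..s. d i) \<le> m - T m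
           \<Longrightarrow> rows_lin_indep s C m d"
    and qa: "qadic CARD('f) alpha"
    and psib: "\<And>r. bij_betw (psi r) {0..<CARD('f)} UNIV"
    and lamb: "\<And>i j. i \<in> {1..s} \<Longrightarrow> j \<ge> 1 \<Longrightarrow> bij_betw (lam i j) UNIV {0..<CARD('f)}"
begin

lemma q2: "CARD('f) \<ge> 2"
proof -
  have "card {0::'f, 1} = 2" by simp
  moreover have "card {0::'f, 1} \<le> CARD('f)" by (rule card_mono) auto
  ultimately show ?thesis by simp
qed

definition dig :: "nat \<Rightarrow> nat \<Rightarrow> nat" where
  "dig n r = qadic_add_nat CARD('f) n alpha r"

definition lin :: "nat \<Rightarrow> nat \<Rightarrow> nat \<Rightarrow> 'f" where
  "lin n i j = (\<Sum>r\<in>{r. C i j r \<noteq> 0}. C i j r * psi r (dig n r))"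

lemma finR: "i \<in> {1..s} \<Longrightarrow> j \<ge> 1 \<Longrightarrow> finite {r. C i j r \<noteq> 0}"
  using fr unfolding finite_row_def by auto

end



lemma dig_shift:
  fixes q m n r :: nat and alpha :: "nat \<Rightarrow> nat"
  assumes q: "q > 0"
  shows "((n + (\<Sum>k\<le>r. alpha k * q^k)) div q^r) mod q
       = ((n + (\<Sum>k<m. alpha k * q^k) + (\<Sum>k\<in>{m..r}. alpha k * q^k)) div q^r) mod q"
proof (cases "m \<le> r")
  case True
  have se: "{..r} = {..<m} \<union> {m..r}" using True by auto
  have "(\<Sum>k\<in>{..<m} \<union> {m..r}. alpha k * q^k) = (\<Sum>k<m. alpha k * q^k) + (\<Sum>k\<in>{m..r}. alpha k * q^k)"
    by (rule sum.union_disjoint) auto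
  then have "(\<Sum>k\<le>r. alpha k * q^k) = (\<Sum>k<m. alpha k * q^k) + (\<Sum>k\<in>{m..r}. alpha k * q^k)"
    by (simp only: se[symmetric])
  then show ?thesis by (simp add: add.assoc)
next
  case False
  then have e: "{m..r} = {}" by auto
  have se: "{..<m} = {..r} \<union> {Suc r..<m}" using False by auto
  have "(\<Sum>k\<in>{..r} \<union> {Suc r..<m}. alpha k * q^k) = (\<Sum>k\<le>r. alpha k * q^k) + (\<Sum>k\<in>{Suc r..<m}. alpha k * q^k)"
    by (rule sum.union_disjoint) auto
  then have s: "(\<Sum>k<m. alpha k * q^k) = (\<Sum>k\<le>r. alpha k * q^k) + (\<Sum>k\<in>{Suc r..<m}. alpha k * q^k)"
    by (simp only: se[symmetric])
  have "q^(Suc r) dvd (\<Sum>k\<in>{Suc r..<m}. alpha k * q^k)"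
    by (rule dvd_sum, rule dvd_mult, rule le_imp_power_dvd) auto
  then obtain Z where Z0: "(\<Sum>k\<in>{Suc r..<m}. alpha k * q^k) = q^(Suc r) * Z"
    by (auto simp: dvd_def)
  then have Z: "(\<Sum>k\<in>{Suc r..<m}. alpha k * q^k) = q^r * (q * Z)"
    by (simp add: mult_ac)
  have "(n + (\<Sum>k<m. alpha k * q^k) + (\<Sum>k\<in>{m..r}. alpha k * q^k)) div q^r
      = (n + (\<Sum>k\<le>r. alpha k * q^k)) div q^r + q * Z"
  proof -
    define X where "X = n + (\<Sum>k\<le>r. alpha k * q^k)"
    have "n + (\<Sum>k<m. alpha k * q^k) + (\<Sum>k\<in>{m..r}. alpha k * q^k) = X + q^r * (q * Z)"
      by (simp add: e s Z add.assoc X_def)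
    moreover have "q^r \<noteq> 0" using q by simp
    ultimately show ?thesis unfolding X_def[symmetric] by (metis div_mult_self2 add.commute)
  qed
  then show ?thesis by simp
qed

lemma low_digit:
  fixes q m r h \<rho> :: nat
  assumes q: "q > 0" and \<rho>: "\<rho> < q^m" and r: "r < m"
  shows "((h*q^m + \<rho> + (\<Sum>k\<in>{m..r}. f k)) div q^r) mod q = \<rho> div q^r mod q"
proof -
  have e: "{m..r} = {}" using r by auto
  have hq: "h*q^m = q^r * (q * (h * q^(m - Suc r)))"
    using r by (simp add: power_add[symmetric] mult_ac flip: power_Suc)
  have "(h*q^m + \<rho>) div q^r = (\<rho> + q^r * (q * (h * q^(m - Suc r)))) div q^r"
    by (simp only: hq add.commute)
  also have "\<dots> = q * (h * q^(m - Suc r)) + \<rho> div q^r"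
    using q by (simp only: div_mult_self2 power_not_zero neq0_conv not_False_eq_True)
  finally have "(h*q^m + \<rho>) div q^r = \<rho> div q^r + q * (h * q^(m - Suc r))" by simp
  then show ?thesis by (simp add: e)
qed

lemma low_digit0:
  fixes q m r h \<rho> :: nat
  assumes q: "q > 0" and \<rho>: "\<rho> < q^m" and r: "r < m"
  shows "((h*q^m + \<rho>) div q^r) mod q = \<rho> div q^r mod q"
  using low_digit[OF q \<rho> r, of h "\<lambda>_. 0"] by simp

lemma high_digit:
  fixes q m r h \<rho> :: nat
  assumes q: "q > 0" and \<rho>: "\<rho> < q^m" and r: "m \<le> r"
  shows "(h*q^m + \<rho> + (\<Sum>k\<in>{m..r}. alpha k * q^k)) div q^r = (h*q^m + (\<Sum>k\<in>{m..r}. alpha k * q^k)) div q^r"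
proof -
  have "q^m dvd (\<Sum>k\<in>{m..r}. alpha k * q^k)"
    by (rule dvd_sum, rule dvd_mult, rule le_imp_power_dvd) auto
  then obtain S where S: "(\<Sum>k\<in>{m..r}. alpha k * q^k) = q^m * S" by (auto simp: dvd_def)
  have qr: "q^r = q^m * q^(r-m)" using r by (simp flip: power_add)
  have qm: "q^m \<noteq> 0" using q by simp
  have "(h*q^m + \<rho> + q^m * S) div q^m = (\<rho> + q^m * (h + S)) div q^m"
    by (simp add: algebra_simps)
  also have "\<dots> = h + S" using qm \<rho> by simp
  finally have 1: "(h*q^m + \<rho> + q^m * S) div q^m = h + S" .
  have "h*q^m + q^m * S = (h+S)*q^m" by (simp add: algebra_simps)
  then have 2: "(h*q^m + q^m * S) div q^m = h + S" using qm by simp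
  show ?thesis unfolding S qr div_mult2_eq 1 2 ..
qed




context alg2_setup begin

lemma key:
  fixes d :: "nat \<Rightarrow> nat" and \<gamma> :: "nat \<Rightarrow> nat \<Rightarrow> 'f" and N :: nat
  shows "\<bar>real (card {n. n < N \<and> (\<forall>i\<in>{1..s}. \<forall>j\<in>{1..d i}. lin n i j = \<gamma> i j)})
          - real N / real CARD('f) ^ (\<Sum>i=1..s. d i)\<bar> \<le> 2 * real CARD('f) ^ t"
proof (cases "(\<Sum>i=1..s. d i) = 0")
  case True
  then have "\<forall>i\<in>{1..s}. d i = 0" by simp
  then have "{n. n < N \<and> (\<forall>i\<in>{1..s}. \<forall>j\<in>{1..d i}. lin n i j = \<gamma> i j)} = {..<N}" by auto
  then show ?thesis using True by simp
next
  case False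
  define q where "q = CARD('f)"
  have q2: "q \<ge> 2" using q2 by (simp add: q_def)
  have q0: "q > 0" using q2 by simp
  define k where "k = (\<Sum>i=1..s. d i)"
  define m where "m = k + t"
  have k1: "k \<ge> 1" using False unfolding k_def by linarith
  have Tm: "T m \<le> t" using Tle[of m] by simp
  have RLI: "rows_lin_indep s C m d"
  proof (rule indep)
    show "T m < m" using k1 Tm by (simp add: m_def)
    show "1 \<le> (\<Sum>i=1..s. d i)" using k1 by (simp add: k_def)
    show "(\<Sum>i=1..s. d i) \<le> m - T m" using Tm unfolding k_def[symmetric] m_def by linarith
  qed
  define alm where "alm = (\<Sum>k<m. alpha k * q^k)"
  define a' where "a' w r = ((w + (\<Sum>k\<in>{m..r}. alpha k * q^k)) div q^r) mod q" for w r
  define lin' where "lin' w i j = (\<Sum>r\<in>{r. C i j r \<noteq> 0}. C i j r * psi r (a' w r))" for w i j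
  define \<Phi> where "\<Phi> w = (\<forall>i\<in>{1..s}. \<forall>j\<in>{1..d i}. lin' w i j = \<gamma> i j)" for w
  have lin_eq: "lin n i j = lin' (n + alm) i j" for n i j
    unfolding lin_def lin'_def dig_def qadic_add_nat_def a'_def alm_def q_def[symmetric]
    using dig_shift[OF q0, of _ alpha _ m] by simp
  define K where "K = Sigma {1..s} (\<lambda>i. {1..d i})"
  have cardK: "card K = k" by (simp add: K_def k_def card_SigmaI)
  have finK: "finite K" by (simp add: K_def)
  have blk: "card {\<rho>. \<rho> < q^m \<and> \<Phi> (h*q^m+\<rho>)} = q^(m-k)" for h
  proof -
    define Hi where "Hi i j = (\<Sum>r\<in>{r. C i j r \<noteq> 0} - {..<m}. C i j r * psi r (a' (h*q^m) r))" for i j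
    define \<beta> where "\<beta> \<rho> = restrict (\<lambda>r. psi r (\<rho> div q^r mod q)) {..<m}" for \<rho>
    have dec: "lin' (h*q^m+\<rho>) i j = (\<Sum>r\<in>{..<m}. C i j r * \<beta> \<rho> r) + Hi i j"
      if \<rho>: "\<rho> < q^m" and i: "i \<in> {1..s}" and j: "j \<ge> 1" for \<rho> i j
    proof -
      define R where "R = {r. C i j r \<noteq> 0}"
      have fR: "finite R" using finR[OF i j] by (simp add: R_def)
      have "lin' (h*q^m+\<rho>) i j = (\<Sum>r\<in>R \<inter> {..<m}. C i j r * psi r (a' (h*q^m+\<rho>) r))
           + (\<Sum>r\<in>R - {..<m}. C i j r * psi r (a' (h*q^m+\<rho>) r))"
        unfolding lin'_def R_def[symmetric] by (rule sum.Int_Diff[OF fR])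
      also have "(\<Sum>r\<in>R \<inter> {..<m}. C i j r * psi r (a' (h*q^m+\<rho>) r)) = (\<Sum>r\<in>R \<inter> {..<m}. C i j r * \<beta> \<rho> r)"
        by (rule sum.cong) (auto simp: a'_def \<beta>_def low_digit0[OF q0 \<rho>])
      also have "\<dots> = (\<Sum>r\<in>{..<m}. C i j r * \<beta> \<rho> r)"
        by (rule sum.mono_neutral_left) (auto simp: R_def)
      also have "(\<Sum>r\<in>R - {..<m}. C i j r * psi r (a' (h*q^m+\<rho>) r)) = Hi i j"
        unfolding Hi_def R_def[symmetric]
        by (rule sum.cong) (auto simp: a'_def high_digit[OF q0 \<rho>])
      finally show ?thesis .
    qed
    define P where "P v = (\<forall>l\<in>K. (\<Sum>r\<in>{..<m}. C (fst l) (snd l) r * v r) = \<gamma> (fst l) (snd l) - Hi (fst l) (snd l))" for v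
    have "{\<rho>. \<rho> < q^m \<and> \<Phi> (h*q^m+\<rho>)} = {\<rho>\<in>{..<q^m}. P (\<beta> \<rho>)}"
    proof (rule set_eqI)
      fix \<rho>
      show "\<rho> \<in> {\<rho>. \<rho> < q^m \<and> \<Phi> (h*q^m+\<rho>)} \<longleftrightarrow> \<rho> \<in> {\<rho>\<in>{..<q^m}. P (\<beta> \<rho>)}"
      proof (cases "\<rho> < q^m")
        case True
        have "\<Phi> (h*q^m+\<rho>) \<longleftrightarrow> P (\<beta> \<rho>)"
          unfolding \<Phi>_def P_def K_def using dec[OF True]
          by (auto simp: eq_diff_eq)
        then show ?thesis using True by simp
      qed simp
    qed
    also have "card \<dots> = card {v\<in>PiE {..<m} (\<lambda>_. UNIV). P v}"
    proof (rule card_bij_filter, rule inj_card_bij)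
      show "inj_on \<beta> {..<q^m}"
      proof (rule inj_onI)
        fix x y assume x: "x \<in> {..<q^m}" and y: "y \<in> {..<q^m}" and e: "\<beta> x = \<beta> y"
        have "\<forall>r<m. x div q^r mod q = y div q^r mod q"
        proof (intro allI impI)
          fix r assume r: "r < m"
          have "psi r (x div q^r mod q) = psi r (y div q^r mod q)"
            using fun_cong[OF e, of r] r by (simp add: \<beta>_def)
          moreover have "inj_on (psi r) {0..<q}" using psib[of r] by (simp add: bij_betw_def q_def)
          ultimately show "x div q^r mod q = y div q^r mod q"
            using q0 by (auto dest: inj_onD)
        qed
        then show "x = y" using digits_inj x y by auto
      qed
      show "\<beta> ` {..<q^m} \<subseteq> PiE {..<m} (\<lambda>_. UNIV)" by (auto simp: \<beta>_def split: if_splits)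
      show "finite (PiE {..<m} (\<lambda>_. UNIV :: 'f set))" by (simp add: finite_PiE)
      show "card {..<q^m} = card (PiE {..<m} (\<lambda>_. UNIV :: 'f set))"
        by (simp add: card_PiE q_def)
    qed
    also have "\<dots> = q ^ (card {..<m} - card K)"
      unfolding P_def q_def
    proof (rule la_count[OF finK])
      show "finite {..<m}" by simp
      show "\<forall>e. (\<forall>r\<in>{..<m}. (\<Sum>l\<in>K. e l * C (fst l) (snd l) r) = 0) \<longrightarrow> (\<forall>l\<in>K. e l = 0)"
      proof (intro allI impI)
        fix e :: "nat \<times> nat \<Rightarrow> 'f"
        assume h: "\<forall>r\<in>{..<m}. (\<Sum>l\<in>K. e l * C (fst l) (snd l) r) = 0"
        have "\<forall>r<m. (\<Sum>i=1..s. \<Sum>j=1..d i. e (i,j) * C i j r) = 0"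
        proof (intro allI impI)
          fix r assume "r < m"
          then have "(\<Sum>l\<in>K. e l * C (fst l) (snd l) r) = 0" using h by simp
          then show "(\<Sum>i=1..s. \<Sum>j=1..d i. e (i,j) * C i j r) = 0"
            unfolding K_def by (simp add: sum.Sigma case_prod_beta)
        qed
        then have "\<forall>i\<in>{1..s}. \<forall>j\<in>{1..d i}. e (i,j) = 0"
          using RLI unfolding rows_lin_indep_def
          by (drule_tac x="\<lambda>i j. e (i,j)" in spec) simp
        then show "\<forall>l\<in>K. e l = 0" by (auto simp: K_def)
      qed
    qed
    finally show ?thesis by (simp add: cardK)
  qed
  have M0: "q^m > 0" using q0 by simp
  have mk: "m - k = t" by (simp add: m_def)
  have IC: "\<bar>real (card {w. w < b \<and> \<Phi> w}) - real b * real (q^(m-k)) / real (q^m)\<bar> \<le> real (q^(m-k))" for b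
    using interval_count[of "q^m" \<Phi> "q^(m-k)" b] M0 blk by simp
  have qmk: "real (q^(m-k)) / real (q^m) = 1 / real q ^ k"
  proof -
    have "q^m = q^(m-k) * q^k" by (simp add: m_def add.commute flip: power_add)
    then show ?thesis using q0 by (simp add: field_simps)
  qed
  have cnt: "card {n. n < N \<and> (\<forall>i\<in>{1..s}. \<forall>j\<in>{1..d i}. lin n i j = \<gamma> i j)}
      = card {w. w < alm + N \<and> \<Phi> w} - card {w. w < alm \<and> \<Phi> w}"
  proof -
    have "{w. w < alm + N \<and> \<Phi> w} = {w. w < alm \<and> \<Phi> w} \<union> (\<lambda>n. n + alm) ` {n. n < N \<and> \<Phi> (n + alm)}"
    proof (rule set_eqI, rule iffI)
      fix w assume w: "w \<in> {w. w < alm + N \<and> \<Phi> w}"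
      show "w \<in> {w. w < alm \<and> \<Phi> w} \<union> (\<lambda>n. n + alm) ` {n. n < N \<and> \<Phi> (n + alm)}"
      proof (cases "w < alm")
        case False
        then show ?thesis using w by (auto intro!: image_eqI[of _ _ "w - alm"])
      qed (use w in auto)
    qed auto
    moreover have "card ((\<lambda>n. n + alm) ` {n. n < N \<and> \<Phi> (n + alm)}) = card {n. n < N \<and> \<Phi> (n + alm)}"
      by (rule card_image) (auto simp: inj_on_def)
    moreover have "{w. w < alm \<and> \<Phi> w} \<inter> (\<lambda>n. n + alm) ` {n. n < N \<and> \<Phi> (n + alm)} = {}" by auto
    ultimately have "card {w. w < alm + N \<and> \<Phi> w} = card {w. w < alm \<and> \<Phi> w} + card {n. n < N \<and> \<Phi> (n + alm)}"
      by (simp add: card_Un_disjoint)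
    moreover have "{n. n < N \<and> (\<forall>i\<in>{1..s}. \<forall>j\<in>{1..d i}. lin n i j = \<gamma> i j)} = {n. n < N \<and> \<Phi> (n + alm)}"
      by (simp add: lin_eq \<Phi>_def)
    ultimately show ?thesis by simp
  qed
  have le: "card {w. w < alm \<and> \<Phi> w} \<le> card {w. w < alm + N \<and> \<Phi> w}" by (rule card_mono) auto
  have IC': "\<bar>real (card {w. w < b \<and> \<Phi> w}) - real b / real q ^ k\<bar> \<le> real q ^ t" for b
  proof -
    have "real b * real (q^(m-k)) / real (q^m) = real b * (real (q^(m-k)) / real (q^m))"
      by (simp only: times_divide_eq_right)
    also have "\<dots> = real b / real q ^ k" unfolding qmk by simp
    finally have e: "real b * real (q^(m-k)) / real (q^m) = real b / real q ^ k" .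
    have "real (q^(m-k)) = real q ^ t" by (simp add: mk)
    then show ?thesis using IC[of b] unfolding e by simp
  qed
  have A1: "\<bar>real (card {w. w < alm + N \<and> \<Phi> w}) - real (alm + N) / real q ^ k\<bar> \<le> real q ^ t"
    by (rule IC')
  have A2: "\<bar>real (card {w. w < alm \<and> \<Phi> w}) - real alm / real q ^ k\<bar> \<le> real q ^ t"
    by (rule IC')
  have "real (card {n. n < N \<and> (\<forall>i\<in>{1..s}. \<forall>j\<in>{1..d i}. lin n i j = \<gamma> i j)})
     = real (card {w. w < alm + N \<and> \<Phi> w}) - real (card {w. w < alm \<and> \<Phi> w})"
    using cnt le by simp
  moreover have "real (alm + N) / real q ^ k = real alm / real q ^ k + real N / real q ^ k"
    by (simp add: add_divide_distrib)
  ultimately show ?thesis using A1 A2 unfolding q_def[symmetric] k_def[symmetric] abs_le_iff by linarith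
qed

end



definition good :: "nat \<Rightarrow> (nat \<Rightarrow> bool) \<Rightarrow> real \<Rightarrow> real \<Rightarrow> bool" where
  "good N S v e \<longleftrightarrow> \<bar>real (card {n. n < N \<and> S n}) - real N * v\<bar> \<le> e"

lemma good_cong:
  assumes "good N S v e" "\<And>n. n < N \<Longrightarrow> S n = S' n" "v = v'" "e \<le> e'"
  shows "good N S' v' e'"
proof -
  have "{n. n < N \<and> S n} = {n. n < N \<and> S' n}" using assms(2) by auto
  then show ?thesis using assms unfolding good_def by auto
qed

lemma good_Un:
  assumes "good N S1 v1 e1" "good N S2 v2 e2" "\<And>n. \<not> (S1 n \<and> S2 n)"
  shows "good N (\<lambda>n. S1 n \<or> S2 n) (v1 + v2) (e1 + e2)"
proof -
  have "{n. n < N \<and> (S1 n \<or> S2 n)} = {n. n < N \<and> S1 n} \<union> {n. n < N \<and> S2 n}" by auto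
  moreover have "{n. n < N \<and> S1 n} \<inter> {n. n < N \<and> S2 n} = {}" using assms(3) by auto
  ultimately have "card {n. n < N \<and> (S1 n \<or> S2 n)} = card {n. n < N \<and> S1 n} + card {n. n < N \<and> S2 n}"
    by (simp add: card_Un_disjoint)
  then show ?thesis using assms(1,2) unfolding good_def by (simp add: algebra_simps abs_le_iff)
qed

lemma good_empty: "e \<ge> 0 \<Longrightarrow> good N (\<lambda>n. False) 0 e"
  by (simp add: good_def)

lemma good_UN:
  assumes "finite I" "\<And>i. i \<in> I \<Longrightarrow> good N (S i) (v i) (e i)"
    "\<And>i j n. i \<in> I \<Longrightarrow> j \<in> I \<Longrightarrow> i \<noteq> j \<Longrightarrow> \<not> (S i n \<and> S j n)"
    "\<And>i. i \<in> I \<Longrightarrow> e i \<ge> 0"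
  shows "good N (\<lambda>n. \<exists>i\<in>I. S i n) (\<Sum>i\<in>I. v i) (\<Sum>i\<in>I. e i)"
  using assms
proof (induction I rule: finite_induct)
  case empty then show ?case by (simp add: good_def)
next
  case (insert i I)
  have "good N (\<lambda>n. S i n \<or> (\<exists>j\<in>I. S j n)) (v i + (\<Sum>i\<in>I. v i)) (e i + (\<Sum>i\<in>I. e i))"
  proof (rule good_Un)
    show "good N (S i) (v i) (e i)" using insert.prems by simp
    show "good N (\<lambda>n. \<exists>j\<in>I. S j n) (\<Sum>i\<in>I. v i) (\<Sum>i\<in>I. e i)"
      using insert.prems by (intro insert.IH) auto
    show "\<not> (S i n \<and> (\<exists>j\<in>I. S j n))" for n using insert.prems(2) insert.hyps by blast
  qed
  then show ?case using insert.hyps by (simp add: good_def)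
qed

lemma decomp:
  fixes P :: "nat \<Rightarrow> nat \<Rightarrow> nat" and R :: "nat \<Rightarrow> bool" and q L A :: nat and V e :: real
  assumes q: "q > 0"
    and P0: "\<And>n. P 0 n = 0"
    and PS: "\<And>l n. P (Suc l) n div q = P l n"
  shows "(\<And>l c. l \<le> L \<Longrightarrow> c < q^l \<Longrightarrow> good N (\<lambda>n. P l n = c \<and> R n) (V / real q^l) e)
    \<Longrightarrow> A \<le> q^L \<Longrightarrow> good N (\<lambda>n. P L n < A \<and> R n) (V * A / real q^L) ((1 + (real q - 1) * L) * e)"
proof (induction L arbitrary: A)
  case 0
  have e0: "e \<ge> 0" using "0.prems"(1)[of 0 0] by (simp add: good_def)
  show ?case
  proof (cases "A = 0")
    case True
    then show ?thesis using e0 by (simp add: good_def)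
  next
    case False
    then have A1: "A = 1" using "0.prems"(2) by simp
    show ?thesis using "0.prems"(1)[of 0 0] A1 P0 by (auto intro: good_cong)
  qed
next
  case (Suc L)
  have e0: "e \<ge> 0" using Suc.prems(1)[of 0 0] by (simp add: good_def)
  define Cs where "Cs = {q * (A div q)..<A}"
  have cardCs: "card Cs = A mod q"
  proof -
    have "A = q * (A div q) + A mod q" by simp
    then show ?thesis unfolding Cs_def by (metis card_atLeastLessThan diff_add_inverse)
  qed
  have Amq: "A mod q \<le> q - 1" using mod_less_divisor[OF q, of A] by linarith
  have g1: "good N (\<lambda>n. P L n < A div q \<and> R n) (V * (A div q) / real q^L) ((1 + (real q - 1) * L) * e)"
  proof (rule Suc.IH)
    show "good N (\<lambda>n. P l n = c \<and> R n) (V / real q^l) e" if "l \<le> L" "c < q^l" for l c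
      using Suc.prems(1) that by simp
    have "A div q \<le> q^(Suc L) div q" using Suc.prems(2) by (rule div_le_mono)
    then show "A div q \<le> q^L" using q by simp
  qed
  have g2: "good N (\<lambda>n. \<exists>c\<in>Cs. P (Suc L) n = c \<and> R n) (\<Sum>c\<in>Cs. V / real q^(Suc L)) (\<Sum>c\<in>Cs. e)"
  proof (rule good_UN)
    show "finite Cs" by (simp add: Cs_def)
    show "good N (\<lambda>n. P (Suc L) n = c \<and> R n) (V / real q^(Suc L)) e" if "c \<in> Cs" for c
    proof (rule Suc.prems(1))
      show "c < q ^ Suc L" using that Suc.prems(2) by (simp add: Cs_def)
    qed simp
  qed (use e0 in auto)
  have g3: "good N (\<lambda>n. (P L n < A div q \<and> R n) \<or> (\<exists>c\<in>Cs. P (Suc L) n = c \<and> R n))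
     (V * (A div q) / real q^L + (\<Sum>c\<in>Cs. V / real q^(Suc L))) ((1 + (real q - 1) * L) * e + (\<Sum>c\<in>Cs. e))"
  proof (rule good_Un[OF g1 g2])
    fix n
    have "P L n = P (Suc L) n div q" using PS by simp
    then show "\<not> ((P L n < A div q \<and> R n) \<and> (\<exists>c\<in>Cs. P (Suc L) n = c \<and> R n))"
      unfolding Cs_def using q by (auto simp: div_less_iff_less_mult less_eq_div_iff_mult_less_eq mult.commute)
  qed
  show ?case
  proof (rule good_cong[OF g3])
    fix n
    have PL: "P L n = P (Suc L) n div q" using PS by simp
    show "((P L n < A div q \<and> R n) \<or> (\<exists>c\<in>Cs. P (Suc L) n = c \<and> R n)) = (P (Suc L) n < A \<and> R n)"
    proof (cases "P L n < A div q")
      case True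
      then have "P (Suc L) n < q * (A div q)" unfolding PL using q
        by (simp add: div_less_iff_less_mult mult.commute)
      moreover have "q * (A div q) \<le> A" by simp
      ultimately have "P (Suc L) n < A" by linarith
      then show ?thesis using True \<open>P (Suc L) n < q * (A div q)\<close> by (auto simp: Cs_def)
    next
      case False
      then have "A div q \<le> P (Suc L) n div q" unfolding PL by simp
      then have "q * (A div q) \<le> q * (P (Suc L) n div q)" by simp
      also have "\<dots> \<le> P (Suc L) n" by simp
      finally have "q * (A div q) \<le> P (Suc L) n" .
      then show ?thesis using False by (auto simp: Cs_def)
    qed
  next
    have "real A = real q * real (A div q) + real (A mod q)"
      by (metis div_mult_mod_eq of_nat_add of_nat_mult mult.commute)
    then show "V * real (A div q) / real q ^ L + (\<Sum>c\<in>Cs. V / real q ^ Suc L) = V * real A / real q ^ Suc L"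
      using q by (simp add: cardCs field_simps)
  next
    have "real (A mod q) \<le> real q - 1" using Amq q by (simp add: of_nat_diff)
    then have "real (card Cs) * e \<le> (real q - 1) * e" using e0 cardCs by (simp add: mult_right_mono)
    then show "(1 + (real q - 1) * L) * e + (\<Sum>c\<in>Cs. e) \<le> (1 + (real q - 1) * real (Suc L)) * e"
      by (simp add: algebra_simps)
  qed
qed




context alg2_setup begin

definition Y :: "nat \<Rightarrow> nat \<Rightarrow> nat \<Rightarrow> nat" where
  "Y n i j = lam i j (lin n i j)"

primrec pre :: "nat \<Rightarrow> nat \<Rightarrow> nat \<Rightarrow> nat" where
  "pre n i 0 = 0"
| "pre n i (Suc l) = CARD('f) * pre n i l + Y n i (Suc l)"

lemma Y_lt: "i \<in> {1..s} \<Longrightarrow> j \<ge> 1 \<Longrightarrow> Y n i j < CARD('f)"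
  using lamb[of i j] unfolding Y_def bij_betw_def by auto

lemma Y_eq:
  assumes "i \<in> {1..s}" "j \<ge> 1" "y < CARD('f)"
  shows "Y n i j = y \<longleftrightarrow> lin n i j = inv_into UNIV (lam i j) y"
proof -
  have b: "bij_betw (lam i j) UNIV {0..<CARD('f)}" using lamb assms by blast
  have "y \<in> lam i j ` UNIV" using b assms(3) unfolding bij_betw_def by auto
  then show ?thesis unfolding Y_def using b
    by (auto simp: bij_betw_def inv_into_f_f f_inv_into_f)
qed

lemma pre_div: "i \<in> {1..s} \<Longrightarrow> pre n i (Suc l) div CARD('f) = pre n i l"
  using Y_lt[of i "Suc l" n] by simp

lemma pre_lt: "i \<in> {1..s} \<Longrightarrow> pre n i l < CARD('f) ^ l"
proof (induction l)
  case 0 then show ?case by simp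
next
  case (Suc l)
  have "Y n i (Suc l) < CARD('f)" using Y_lt Suc.prems by simp
  then have "pre n i (Suc l) < CARD('f) * pre n i l + CARD('f)" by simp
  also have "\<dots> = CARD('f) * (pre n i l + 1)" by simp
  also have "\<dots> \<le> CARD('f) * CARD('f) ^ l" using Suc by (intro mult_left_mono) auto
  finally show ?case by simp
qed

lemma pre_eq:
  assumes i: "i \<in> {1..s}"
  shows "b < CARD('f) ^ l \<Longrightarrow> pre n i l = b \<longleftrightarrow> (\<forall>j\<in>{1..l}. Y n i j = b div CARD('f) ^ (l - j) mod CARD('f))"
proof (induction l arbitrary: b)
  case 0 then show ?case by simp
next
  case (Suc l)
  define q where "q = CARD('f)"
  have q0: "q > 0" by (simp add: q_def)
  have Ylt: "Y n i (Suc l) < q" using Y_lt[OF i] by (simp add: q_def)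
  have bq: "b div q < q ^ l" using Suc.prems q0 by (simp add: q_def div_less_iff_less_mult mult.commute)
  have "pre n i (Suc l) = b \<longleftrightarrow> pre n i l = b div q \<and> Y n i (Suc l) = b mod q"
  proof
    assume h: "pre n i (Suc l) = b"
    then show "pre n i l = b div q \<and> Y n i (Suc l) = b mod q"
      using Ylt by (auto simp: q_def)
  next
    assume "pre n i l = b div q \<and> Y n i (Suc l) = b mod q"
    then show "pre n i (Suc l) = b" by (simp add: q_def)
  qed
  also have "\<dots> \<longleftrightarrow> (\<forall>j\<in>{1..l}. Y n i j = b div q div q ^ (l - j) mod q) \<and> Y n i (Suc l) = b mod q"
    using Suc.IH[OF bq[unfolded q_def]] by (simp add: q_def)
  also have "\<dots> \<longleftrightarrow> (\<forall>j\<in>{1..Suc l}. Y n i j = b div q ^ (Suc l - j) mod q)"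
  proof -
    have "b div q div q ^ (l - j) = b div q ^ (Suc l - j)" if "j \<in> {1..l}" for j
      using that by (simp add: div_mult2_eq Suc_diff_le power_Suc mult.commute)
    then show ?thesis by (auto simp: atLeastAtMostSuc_conv)
  qed
  finally show ?case by (simp add: q_def)
qed

end



context alg2_setup begin

lemma elem:
  assumes "\<forall>i\<in>{1..s}. b i < CARD('f) ^ d i"
  shows "good N (\<lambda>n. \<forall>i\<in>{1..s}. pre n i (d i) = b i) (\<Prod>i\<in>{1..s}. 1 / real CARD('f) ^ d i) (2 * real CARD('f) ^ t)"
proof -
  define \<gamma> where "\<gamma> i j = inv_into UNIV (lam i j) (b i div CARD('f) ^ (d i - j) mod CARD('f))" for i j
  have eq: "(\<forall>i\<in>{1..s}. pre n i (d i) = b i) \<longleftrightarrow> (\<forall>i\<in>{1..s}. \<forall>j\<in>{1..d i}. lin n i j = \<gamma> i j)" for n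
  proof -
    have "pre n i (d i) = b i \<longleftrightarrow> (\<forall>j\<in>{1..d i}. lin n i j = \<gamma> i j)" if i: "i \<in> {1..s}" for i
      using pre_eq[OF i assms[rule_format, OF i]] Y_eq[OF i] by (simp add: \<gamma>_def)
    then show ?thesis by blast
  qed
  have "{n. n < N \<and> (\<forall>i\<in>{1..s}. pre n i (d i) = b i)} = {n. n < N \<and> (\<forall>i\<in>{1..s}. \<forall>j\<in>{1..d i}. lin n i j = \<gamma> i j)}"
    using eq by auto
  moreover have "(\<Prod>i\<in>{1..s}. 1 / real CARD('f) ^ d i) = 1 / real CARD('f) ^ (\<Sum>i=1..s. d i)"
    by (simp add: power_sum prod_dividef)
  ultimately show ?thesis using key[of N d \<gamma>] unfolding good_def by simp
qed

lemma multi: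
  "finite I \<Longrightarrow> I \<subseteq> {1..s} \<Longrightarrow> (\<forall>i\<in>I. A i \<le> CARD('f) ^ L) \<longrightarrow> (\<forall>d b. (\<forall>i\<in>{1..s}-I. b i < CARD('f) ^ d i) \<longrightarrow>
    good N (\<lambda>n. (\<forall>i\<in>I. pre n i L < A i) \<and> (\<forall>i\<in>{1..s}-I. pre n i (d i) = b i))
      ((\<Prod>i\<in>I. real (A i) / real CARD('f) ^ L) * (\<Prod>i\<in>{1..s}-I. 1 / real CARD('f) ^ d i))
      ((1 + (real CARD('f) - 1) * L) ^ card I * (2 * real CARD('f) ^ t)))"
proof (induction I rule: finite_subset_induct')
  case empty
  show ?case using elem by simp
next
  case (insert i0 I)
  show ?case
  proof (intro impI allI)
    fix d b
    assume A: "\<forall>i\<in>insert i0 I. A i \<le> CARD('f) ^ L" and B: "\<forall>i\<in>{1..s} - insert i0 I. b i < CARD('f) ^ d i"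
    define q where "q = CARD('f)"
    define R where "R n = ((\<forall>i\<in>I. pre n i L < A i) \<and> (\<forall>i\<in>{1..s}-insert i0 I. pre n i (d i) = b i))" for n
    define V where "V = (\<Prod>i\<in>I. real (A i) / real q ^ L) * (\<Prod>i\<in>{1..s}-insert i0 I. 1 / real q ^ d i)"
    define e where "e = (1 + (real q - 1) * L) ^ card I * (2 * real q ^ t)"
    have rest: "{1..s} - I = insert i0 ({1..s} - insert i0 I)" using insert.hyps by auto
    have fr: "finite ({1..s} - insert i0 I)" by simp
    have hyp: "good N (\<lambda>n. pre n i0 l = c \<and> R n) (V / real q^l) e" if "l \<le> L" "c < q^l" for l c
    proof -
      have IH: "good N (\<lambda>n. (\<forall>i\<in>I. pre n i L < A i) \<and> (\<forall>i\<in>{1..s}-I. pre n i ((d(i0:=l)) i) = (b(i0:=c)) i))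
      ((\<Prod>i\<in>I. real (A i) / real CARD('f) ^ L) * (\<Prod>i\<in>{1..s}-I. 1 / real CARD('f) ^ (d(i0:=l)) i))
      ((1 + (real CARD('f) - 1) * L) ^ card I * (2 * real CARD('f) ^ t))"
      proof -
        have A': "\<forall>i\<in>I. A i \<le> CARD('f) ^ L" using A by simp
        have B': "\<forall>i\<in>{1..s} - I. (b(i0 := c)) i < CARD('f) ^ (d(i0 := l)) i"
          using B that unfolding rest by (auto simp: q_def)
        show ?thesis using insert.IH[THEN mp, OF A', THEN spec[where x="d(i0:=l)"], THEN spec[where x="b(i0:=c)"], THEN mp, OF B'] .
      qed
      show ?thesis
      proof (rule good_cong[OF IH])
        show "((\<forall>i\<in>I. pre n i L < A i) \<and> (\<forall>i\<in>{1..s}-I. pre n i ((d(i0:=l)) i) = (b(i0:=c)) i)) = (pre n i0 l = c \<and> R n)" for n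
          unfolding rest R_def by auto
        have "(\<Prod>i\<in>{1..s}-I. 1 / real CARD('f) ^ (d(i0:=l)) i) = 1 / real q ^ l * (\<Prod>i\<in>{1..s}-insert i0 I. 1 / real q ^ d i)"
          unfolding rest q_def by (subst prod.insert[OF fr]) (auto intro!: prod.cong)
        then show "(\<Prod>i\<in>I. real (A i) / real CARD('f) ^ L) * (\<Prod>i\<in>{1..s}-I. 1 / real CARD('f) ^ (d(i0:=l)) i) = V / real q ^ l"
          by (simp add: V_def q_def)
      qed (simp add: e_def q_def)
    qed
    have D: "good N (\<lambda>n. pre n i0 L < A i0 \<and> R n) (V * A i0 / real q^L) ((1 + (real q - 1) * L) * e)"
    proof (rule decomp[where P = "\<lambda>l n. pre n i0 l"])
      show "q > 0" by (simp add: q_def)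
      show "pre n i0 0 = 0" for n by simp
      show "pre n i0 (Suc l) div q = pre n i0 l" for l n using pre_div insert.hyps by (simp add: q_def)
      show "good N (\<lambda>n. pre n i0 l = c \<and> R n) (V / real q^l) e" if "l \<le> L" "c < q^l" for l c
        using hyp that by blast
      show "A i0 \<le> q ^ L" using A by (simp add: q_def)
    qed
    show "good N (\<lambda>n. (\<forall>i\<in>insert i0 I. pre n i L < A i) \<and> (\<forall>i\<in>{1..s}-insert i0 I. pre n i (d i) = b i))
      ((\<Prod>i\<in>insert i0 I. real (A i) / real CARD('f) ^ L) * (\<Prod>i\<in>{1..s}-insert i0 I. 1 / real CARD('f) ^ d i))
      ((1 + (real CARD('f) - 1) * L) ^ card (insert i0 I) * (2 * real CARD('f) ^ t))"
    proof (rule good_cong[OF D])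
      show "(pre n i0 L < A i0 \<and> R n) = ((\<forall>i\<in>insert i0 I. pre n i L < A i) \<and> (\<forall>i\<in>{1..s}-insert i0 I. pre n i (d i) = b i))" for n
        by (auto simp: R_def)
      show "V * real (A i0) / real q ^ L = (\<Prod>i\<in>insert i0 I. real (A i) / real CARD('f) ^ L) * (\<Prod>i\<in>{1..s}-insert i0 I. 1 / real CARD('f) ^ d i)"
        using insert.hyps by (simp add: V_def q_def prod.insert)
      show "(1 + (real q - 1) * real L) * e \<le> (1 + (real CARD('f) - 1) * L) ^ card (insert i0 I) * (2 * real CARD('f) ^ t)"
        using insert.hyps by (simp add: e_def q_def card_insert_if)
    qed
  qed
qed

lemma Gbound:
  assumes "\<forall>i\<in>{1..s}. A i \<le> CARD('f) ^ L"
  shows "good N (\<lambda>n. \<forall>i\<in>{1..s}. pre n i L < A i) (\<Prod>i\<in>{1..s}. real (A i) / real CARD('f) ^ L)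
      ((1 + (real CARD('f) - 1) * L) ^ s * (2 * real CARD('f) ^ t))"
  using multi[of "{1..s}" A L N] assms by (auto elim: good_cong)

end



lemma prod_diff_le:
  fixes a b :: "nat \<Rightarrow> real"
  assumes "finite K" "\<forall>i\<in>K. 0 \<le> a i \<and> a i \<le> 1 \<and> 0 \<le> b i \<and> b i \<le> 1"
  shows "\<bar>(\<Prod>i\<in>K. a i) - (\<Prod>i\<in>K. b i)\<bar> \<le> (\<Sum>i\<in>K. \<bar>a i - b i\<bar>)"
  using assms
proof (induction K rule: finite_induct)
  case empty then show ?case by simp
next
  case (insert k K)
  have a1: "0 \<le> (\<Prod>i\<in>K. a i)" "(\<Prod>i\<in>K. a i) \<le> 1" using insert.prems
    by (auto intro: prod_nonneg prod_le_1)
  have b1: "0 \<le> b k" "b k \<le> 1" using insert.prems by auto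
  have "a k * (\<Prod>i\<in>K. a i) - b k * (\<Prod>i\<in>K. b i) = (a k - b k) * (\<Prod>i\<in>K. a i) + b k * ((\<Prod>i\<in>K. a i) - (\<Prod>i\<in>K. b i))"
    by (simp add: algebra_simps)
  then have "\<bar>a k * (\<Prod>i\<in>K. a i) - b k * (\<Prod>i\<in>K. b i)\<bar> \<le> \<bar>a k - b k\<bar> * (\<Prod>i\<in>K. a i) + b k * \<bar>(\<Prod>i\<in>K. a i) - (\<Prod>i\<in>K. b i)\<bar>"
    using a1 b1 by (simp add: abs_mult) (metis abs_mult abs_of_nonneg abs_triangle_ineq)
  also have "\<dots> \<le> \<bar>a k - b k\<bar> * 1 + 1 * (\<Sum>i\<in>K. \<bar>a i - b i\<bar>)"
    using a1 b1 insert.IH insert.prems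
    by (intro add_mono mult_mono) (auto intro: sum_nonneg)
  finally show ?case using insert.hyps by simp
qed

context alg2_setup begin

definition xx :: "nat \<Rightarrow> nat \<Rightarrow> real" where
  "xx n i = alg2_coord psi C lam (qadic_add_nat CARD('f) n alpha) i"

lemma xx_eq: "xx n i = (\<Sum>j. real (Y n i (Suc j)) / real CARD('f) ^ Suc j)"
  unfolding xx_def alg2_coord_def Y_def lin_def dig_def ..

lemma xx_bounds:
  assumes i: "i \<in> {1..s}"
  shows "real (pre n i L) / real CARD('f) ^ L \<le> xx n i \<and> xx n i \<le> (real (pre n i L) + 1) / real CARD('f) ^ L"
proof -
  define q where "q = real CARD('f)"
  have q2: "q \<ge> 2" using q2 by (simp add: q_def)
  define f where "f j = real (Y n i (Suc j)) / q ^ Suc j" for j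
  define g where "g j = (q - 1) / q * (1/q) ^ j" for j
  have f0: "0 \<le> f j" for j using q2 unfolding f_def by (intro divide_nonneg_pos) auto
  have fg: "f j \<le> g j" for j
  proof -
    have "real (Y n i (Suc j)) \<le> q - 1" using Y_lt[OF i, of "Suc j" n] by (simp add: q_def of_nat_diff)
    then have "f j \<le> (q - 1) / q ^ Suc j" unfolding f_def using q2 by (intro divide_right_mono) auto
    also have "\<dots> = g j" by (simp add: g_def power_divide field_simps)
    finally show ?thesis .
  qed
  have sg: "summable g" unfolding g_def using q2 by (intro summable_mult summable_geometric) auto
  have sf: "summable f" by (rule summable_comparison_test'[OF sg]) (use f0 fg in auto)
  have xf: "xx n i = suminf f" unfolding xx_eq f_def q_def ..
  have split: "suminf f = (\<Sum>j. f (j + L)) + (\<Sum>j<L. f j)" by (rule suminf_split_initial_segment[OF sf])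
  have head: "(\<Sum>j<l. f j) = real (pre n i l) / q ^ l" for l
  proof (induction l)
    case 0 then show ?case by simp
  next
    case (Suc l)
    have "(\<Sum>j<Suc l. f j) = real (pre n i l) / q ^ l + real (Y n i (Suc l)) / q ^ Suc l"
      using Suc by (simp add: f_def)
    also have "\<dots> = real (pre n i (Suc l)) / q ^ Suc l" using q2 by (simp add: q_def field_simps)
    finally show ?case .
  qed
  have sfL: "summable (\<lambda>j. f (j + L))" using sf by (simp add: summable_iff_shift)
  have sgL: "summable (\<lambda>j. g (j + L))" using sg by (simp add: summable_iff_shift)
  have t0: "0 \<le> (\<Sum>j. f (j + L))" using sfL f0 by (intro suminf_nonneg) auto
  have "(\<Sum>j. f (j + L)) \<le> (\<Sum>j. g (j + L))" using sfL sgL fg by (intro suminf_le) auto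
  also have "(\<Sum>j. g (j + L)) = (\<Sum>j. ((q - 1) / q * (1/q)^L) * (1/q) ^ j)"
    by (simp add: g_def power_add mult_ac)
  also have "\<dots> = ((q - 1) / q * (1/q)^L) * (1 / (1 - 1/q))"
    using q2 by (subst suminf_mult) (auto simp: suminf_geometric)
  also have "\<dots> = 1 / q ^ L" using q2 by (simp add: field_simps power_divide)
  finally have t1: "(\<Sum>j. f (j + L)) \<le> 1 / q ^ L" .
  show ?thesis unfolding xf split head q_def[symmetric] using t0 t1 by (simp add: add_divide_distrib)
qed

end



context alg2_setup begin

lemma count_bound:
  fixes N L :: nat and u :: "nat \<Rightarrow> real"
  assumes NL: "real N \<le> real CARD('f) ^ L" and u: "\<forall>i\<in>{1..s}. 0 \<le> u i \<and> u i \<le> 1"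
  shows "\<bar>real (card {n. n < N \<and> (\<forall>i\<in>{1..s}. xx n i < u i)}) - real N * (\<Prod>i=1..s. u i)\<bar>
     \<le> (1 + (real CARD('f) - 1) * L) ^ s * (2 * real CARD('f) ^ t) + 2 * s"
proof -
  define E where "E = (1 + (real CARD('f) - 1) * L) ^ s * (2 * real CARD('f) ^ t)"
  define Q where "Q = CARD('f) ^ L"
  define qL where "qL = real Q"
  have qL0: "qL > 0" by (simp add: qL_def Q_def)
  have qLp: "real CARD('f) ^ L = qL" by (simp add: qL_def Q_def)
  define U where "U i = nat \<lfloor>u i * qL\<rfloor>" for i
  have hU: "real (U i) \<le> u i * qL \<and> u i * qL < real (U i) + 1 \<and> U i \<le> Q" if i: "i \<in> {1..s}" for i
  proof -
    have u0: "0 \<le> u i * qL" using u i qL0 by simp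
    have "real (U i) = real_of_int \<lfloor>u i * qL\<rfloor>" using u0 by (simp add: U_def)
    moreover have "u i * qL \<le> qL" using u i qL0 by (simp add: mult_left_le_one_le)
    then have "\<lfloor>u i * qL\<rfloor> \<le> int Q" by (simp add: qL_def floor_le_iff)
    ultimately show ?thesis by (simp add: U_def)
  qed
  define Av where "Av i = U i - 1" for i
  define Bv where "Bv i = min (U i + 1) Q" for i
  define S where "S = {n. n < N \<and> (\<forall>i\<in>{1..s}. xx n i < u i)}"
  define Sa where "Sa = {n. n < N \<and> (\<forall>i\<in>{1..s}. pre n i L < Av i)}"
  define Sb where "Sb = {n. n < N \<and> (\<forall>i\<in>{1..s}. pre n i L < Bv i)}"
  have "Sa \<subseteq> S"
  proof
    fix n assume "n \<in> Sa"
    then have n: "n < N" "\<forall>i\<in>{1..s}. pre n i L < Av i" by (auto simp: Sa_def)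
    have "xx n i < u i" if i: "i \<in> {1..s}" for i
    proof -
      have "pre n i L < U i - 1" using n(2) i by (simp add: Av_def)
      then have "pre n i L + 1 < U i" by linarith
      then have "real (pre n i L) + 1 < u i * qL" using hU[OF i] by linarith
      then have "(real (pre n i L) + 1) / qL < u i" using qL0 by (simp add: divide_less_eq)
      then show ?thesis using xx_bounds[OF i, of n L] qLp by simp
    qed
    then show "n \<in> S" using n by (simp add: S_def)
  qed
  have "S \<subseteq> Sb"
  proof
    fix n assume "n \<in> S"
    then have n: "n < N" "\<forall>i\<in>{1..s}. xx n i < u i" by (auto simp: S_def)
    have "pre n i L < Bv i" if i: "i \<in> {1..s}" for i
    proof -
      have "real (pre n i L) / qL < u i" using xx_bounds[OF i, of n L] qLp n(2) i by force
      then have "real (pre n i L) < u i * qL" using qL0 by (simp add: divide_less_eq)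
      then have "pre n i L < U i + 1" using hU[OF i] by linarith
      moreover have "pre n i L < Q" using pre_lt[OF i] by (simp add: Q_def)
      ultimately show ?thesis by (simp add: Bv_def)
    qed
    then show "n \<in> Sb" using n by (simp add: Sb_def)
  qed
  have cS: "card Sa \<le> card S" "card S \<le> card Sb"
    using \<open>Sa \<subseteq> S\<close> \<open>S \<subseteq> Sb\<close> by (auto intro!: card_mono simp: S_def Sb_def)
  have GA: "good N (\<lambda>n. \<forall>i\<in>{1..s}. pre n i L < Av i) (\<Prod>i\<in>{1..s}. real (Av i) / real CARD('f) ^ L) E"
    unfolding E_def
  proof (rule Gbound, intro ballI)
    fix i assume i: "i \<in> {1..s}"
    show "Av i \<le> CARD('f) ^ L" using hU[OF i] unfolding Av_def Q_def by linarith
  qed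
  have GB: "good N (\<lambda>n. \<forall>i\<in>{1..s}. pre n i L < Bv i) (\<Prod>i\<in>{1..s}. real (Bv i) / real CARD('f) ^ L) E"
    unfolding E_def by (rule Gbound) (auto simp: Bv_def Q_def)
  have pA: "\<bar>(\<Prod>i\<in>{1..s}. real (Av i) / qL) - (\<Prod>i\<in>{1..s}. u i)\<bar> \<le> (\<Sum>i\<in>{1..s}. 2 / qL)"
  proof -
    have "\<bar>(\<Prod>i\<in>{1..s}. real (Av i) / qL) - (\<Prod>i\<in>{1..s}. u i)\<bar> \<le> (\<Sum>i\<in>{1..s}. \<bar>real (Av i) / qL - u i\<bar>)"
    proof (rule prod_diff_le)
      show "\<forall>i\<in>{1..s}. 0 \<le> real (Av i) / qL \<and> real (Av i) / qL \<le> 1 \<and> 0 \<le> u i \<and> u i \<le> 1"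
      proof
        fix i assume i: "i \<in> {1..s}"
        have "Av i \<le> Q" using hU[OF i] unfolding Av_def by linarith
        then have "real (Av i) \<le> qL" by (simp add: qL_def)
        then show "0 \<le> real (Av i) / qL \<and> real (Av i) / qL \<le> 1 \<and> 0 \<le> u i \<and> u i \<le> 1"
          using u i qL0 by auto
      qed
    qed simp
    also have "\<dots> \<le> (\<Sum>i\<in>{1..s}. 2 / qL)"
    proof (rule sum_mono)
      fix i assume i: "i \<in> {1..s}"
      have "\<bar>real (Av i) - u i * qL\<bar> \<le> 2" using hU[OF i] by (simp add: Av_def of_nat_diff) linarith
      then have "\<bar>real (Av i) - u i * qL\<bar> / qL \<le> 2 / qL" using qL0 by (simp add: divide_right_mono)
      moreover have "\<bar>real (Av i) / qL - u i\<bar> = \<bar>real (Av i) - u i * qL\<bar> / qL"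
        using qL0 by (simp add: field_simps abs_divide)
      ultimately show "\<bar>real (Av i) / qL - u i\<bar> \<le> 2 / qL" by simp
    qed
    finally show ?thesis .
  qed
  have pB: "\<bar>(\<Prod>i\<in>{1..s}. real (Bv i) / qL) - (\<Prod>i\<in>{1..s}. u i)\<bar> \<le> (\<Sum>i\<in>{1..s}. 2 / qL)"
  proof -
    have "\<bar>(\<Prod>i\<in>{1..s}. real (Bv i) / qL) - (\<Prod>i\<in>{1..s}. u i)\<bar> \<le> (\<Sum>i\<in>{1..s}. \<bar>real (Bv i) / qL - u i\<bar>)"
    proof (rule prod_diff_le)
      show "\<forall>i\<in>{1..s}. 0 \<le> real (Bv i) / qL \<and> real (Bv i) / qL \<le> 1 \<and> 0 \<le> u i \<and> u i \<le> 1"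
      proof
        fix i assume i: "i \<in> {1..s}"
        have "real (Bv i) \<le> qL" by (simp add: Bv_def qL_def)
        then show "0 \<le> real (Bv i) / qL \<and> real (Bv i) / qL \<le> 1 \<and> 0 \<le> u i \<and> u i \<le> 1"
          using u i qL0 by auto
      qed
    qed simp
    also have "\<dots> \<le> (\<Sum>i\<in>{1..s}. 2 / qL)"
    proof (rule sum_mono)
      fix i assume i: "i \<in> {1..s}"
      have "\<bar>real (Bv i) - u i * qL\<bar> \<le> 2"
      proof (cases "U i + 1 \<le> Q")
        case True then show ?thesis using hU[OF i] by (simp add: Bv_def)
      next
        case False
        then have "U i = Q" using hU[OF i] by simp
        moreover have "u i * qL \<le> qL" using u i qL0 by (simp add: mult_left_le_one_le)
        ultimately show ?thesis using hU[OF i] False by (simp add: Bv_def qL_def)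
      qed
      then have "\<bar>real (Bv i) - u i * qL\<bar> / qL \<le> 2 / qL" using qL0 by (simp add: divide_right_mono)
      moreover have "\<bar>real (Bv i) / qL - u i\<bar> = \<bar>real (Bv i) - u i * qL\<bar> / qL"
        using qL0 by (simp add: field_simps abs_divide)
      ultimately show "\<bar>real (Bv i) / qL - u i\<bar> \<le> 2 / qL" by simp
    qed
    finally show ?thesis .
  qed
  have Ns: "real N * (\<Sum>i\<in>{1..s}. 2 / qL) \<le> 2 * s"
  proof -
    have "real N * (\<Sum>i\<in>{1..s}. 2 / qL) = 2 * real s * (real N / qL)" by simp
    also have "\<dots> \<le> 2 * real s * 1" using NL qL0 qLp by (intro mult_left_mono) auto
    finally show ?thesis by simp
  qed
  have N0: "real N \<ge> 0" by simp
  have dA: "\<bar>real N * (\<Prod>i\<in>{1..s}. real (Av i) / qL) - real N * (\<Prod>i\<in>{1..s}. u i)\<bar> \<le> 2 * s"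
    using mult_left_mono[OF pA N0] Ns by (simp add: abs_mult right_diff_distrib[symmetric])
  have dB: "\<bar>real N * (\<Prod>i\<in>{1..s}. real (Bv i) / qL) - real N * (\<Prod>i\<in>{1..s}. u i)\<bar> \<le> 2 * s"
    using mult_left_mono[OF pB N0] Ns by (simp add: abs_mult right_diff_distrib[symmetric])
  have gA: "\<bar>real (card Sa) - real N * (\<Prod>i\<in>{1..s}. real (Av i) / qL)\<bar> \<le> E"
    using GA unfolding good_def Sa_def qLp .
  have gB: "\<bar>real (card Sb) - real N * (\<Prod>i\<in>{1..s}. real (Bv i) / qL)\<bar> \<le> E"
    using GB unfolding good_def Sb_def qLp .
  have "real (card Sa) \<le> real (card S)" "real (card S) \<le> real (card Sb)" using cS by auto
  then have "\<bar>real (card S) - real N * (\<Prod>i=1..s. u i)\<bar> \<le> E + 2 * s"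
    using gA gB dA dB by (simp add: abs_le_iff)
  then show ?thesis by (simp add: S_def E_def)
qed

end



context alg2_setup begin

lemma disc_bound:
  fixes N L :: nat
  assumes N1: "N \<ge> 1" and NL: "real N \<le> real CARD('f) ^ L"
  shows "real N * star_discrepancy s N (\<lambda>n i. alg2_coord psi C lam (qadic_add_nat CARD('f) n alpha) i)
     \<le> (1 + (real CARD('f) - 1) * L) ^ s * (2 * real CARD('f) ^ t) + 2 * s"
proof -
  define B where "B = (1 + (real CARD('f) - 1) * L) ^ s * (2 * real CARD('f) ^ t) + 2 * s"
  have fx: "(\<lambda>n i. alg2_coord psi C lam (qadic_add_nat CARD('f) n alpha) i) = xx"
    by (intro ext) (simp add: xx_def)
  have Np: "real N > 0" using N1 by simp
  have "(SUP u\<in>{u. \<forall>i\<in>{1..s}. 0 \<le> u i \<and> u i \<le> 1}.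
        \<bar>real (card {n. n < N \<and> (\<forall>i\<in>{1..s}. xx n i < u i)}) / real N - (\<Prod>i=1..s. u i)\<bar>) \<le> B / real N"
  proof (rule cSUP_least)
    show "{u. \<forall>i\<in>{1..s}. 0 \<le> u i \<and> u i \<le> (1::real)} \<noteq> {}" proof -
      have "(\<lambda>_. 0::real) \<in> {u. \<forall>i\<in>{1..s}. 0 \<le> u i \<and> u i \<le> 1}" by simp
      then show ?thesis by (metis empty_iff)
    qed
    fix u assume "u \<in> {u. \<forall>i\<in>{1..s}. 0 \<le> u i \<and> u i \<le> (1::real)}"
    then have u: "\<forall>i\<in>{1..s}. 0 \<le> u i \<and> u i \<le> 1" by simp
    have cb: "\<bar>real (card {n. n < N \<and> (\<forall>i\<in>{1..s}. xx n i < u i)}) - real N * (\<Prod>i=1..s. u i)\<bar> \<le> B"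
      using count_bound[OF NL u] unfolding B_def .
    define a where "a = real (card {n. n < N \<and> (\<forall>i\<in>{1..s}. xx n i < u i)})"
    define P where "P = (\<Prod>i=1..s. u i)"
    have "a / real N - P = (a - real N * P) / real N" using Np by (simp add: field_simps)
    then have "\<bar>a / real N - P\<bar> = \<bar>a - real N * P\<bar> / real N" using Np by (simp add: abs_divide)
    then have "\<bar>real (card {n. n < N \<and> (\<forall>i\<in>{1..s}. xx n i < u i)}) / real N - (\<Prod>i=1..s. u i)\<bar>
        = \<bar>real (card {n. n < N \<and> (\<forall>i\<in>{1..s}. xx n i < u i)}) - real N * (\<Prod>i=1..s. u i)\<bar> / real N"
      unfolding a_def P_def .
    also have "\<dots> \<le> B / real N" using cb by (rule divide_right_mono) (use Np in simp)
    finally show "\<bar>real (card {n. n < N \<and> (\<forall>i\<in>{1..s}. xx n i < u i)}) / real N - (\<Prod>i=1..s. u i)\<bar> \<le> B / real N" .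
  qed
  then have "star_discrepancy s N xx \<le> B / real N"
    unfolding star_discrepancy_def .
  then have "real N * star_discrepancy s N xx \<le> real N * (B / real N)"
    by (rule mult_left_mono) (use Np in simp)
  also have "real N * (B / real N) = B" using Np by simp
  finally show ?thesis unfolding fx B_def .
qed

lemma final:
  "\<exists>c. \<forall>N\<ge>2. real N * star_discrepancy s N
            (\<lambda>n i. alg2_coord psi C lam (qadic_add_nat CARD('f) n alpha) i)
          \<le> c * ln (real N) ^ s"
proof -
  define q where "q = real CARD('f)"
  have q2: "q \<ge> 2" using q2 by (simp add: q_def)
  have l2: "ln (2::real) > 0" by simp
  define K0 where "K0 = (2 * q - 1) / ln 2"
  define c where "c = K0 ^ s * (2 * q ^ t) + 2 * s * (1 / ln 2) ^ s"
  show ?thesis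
  proof (intro exI allI impI)
    fix N :: nat assume N2: "N \<ge> 2"
    define lg where "lg = log 2 (real N)"
    have lgdef: "lg = ln (real N) / ln 2" by (simp add: lg_def log_def)
    have lg1: "lg \<ge> 1" unfolding lg_def using N2 by (subst le_log_iff) auto
    define L where "L = nat \<lceil>lg\<rceil>"
    have c0: "0 \<le> \<lceil>lg\<rceil>" using lg1 by simp
    have rL: "real L = real_of_int \<lceil>lg\<rceil>" using c0 by (simp add: L_def)
    have L1: "lg \<le> real L" "real L < lg + 1" using ceiling_correct[of lg] unfolding rL by linarith+
    have NL: "real N \<le> real CARD('f) ^ L"
    proof -
      have "real N = 2 powr lg" unfolding lg_def using N2 by (subst powr_log_cancel) auto
      also have "\<dots> \<le> 2 powr real L" using L1 by (intro powr_mono) auto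
      also have "\<dots> = 2 ^ L" by (rule powr_realpow) simp
      also have "\<dots> \<le> q ^ L" using q2 by (intro power_mono) auto
      finally show ?thesis by (simp add: q_def)
    qed
    have D: "real N * star_discrepancy s N (\<lambda>n i. alg2_coord psi C lam (qadic_add_nat CARD('f) n alpha) i)
     \<le> (1 + (q - 1) * L) ^ s * (2 * q ^ t) + 2 * s"
      using disc_bound[OF _ NL] N2 by (simp add: q_def)
    have lnN: "ln (real N) = lg * ln 2" using lgdef by simp
    have "1 + (q - 1) * L \<le> lg + (q - 1) * (2 * lg)"
      using L1 lg1 q2 by (intro add_mono mult_left_mono) auto
    also have "\<dots> = K0 * ln (real N)" unfolding K0_def lgdef using l2 by (simp add: field_simps)
    finally have b1: "1 + (q - 1) * L \<le> K0 * ln (real N)" .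
    have "(1 + (q - 1) * L) ^ s \<le> (K0 * ln (real N)) ^ s"
      using b1 q2 by (intro power_mono) auto
    then have b2': "(1 + (q - 1) * L) ^ s * (2 * q ^ t) \<le> (K0 * ln (real N)) ^ s * (2 * q ^ t)"
      by (rule mult_right_mono) (use q2 in auto)
    have eqK: "(K0 * ln (real N)) ^ s * (2 * q ^ t) = K0 ^ s * (2 * q ^ t) * ln (real N) ^ s"
      by (simp only: power_mult_distrib mult_ac)
    have b2: "(1 + (q - 1) * L) ^ s * (2 * q ^ t) \<le> K0 ^ s * (2 * q ^ t) * ln (real N) ^ s"
      using b2' unfolding eqK .
    have "1 \<le> lg ^ s" using lg1 by simp
    then have "2 * real s * 1 \<le> 2 * real s * lg ^ s" by (intro mult_left_mono) auto
    also have "lg ^ s = (1 / ln 2) ^ s * ln (real N) ^ s" by (simp add: lgdef power_divide)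
    finally have b3: "2 * real s \<le> 2 * real s * (1 / ln 2) ^ s * ln (real N) ^ s" by (simp add: mult_ac)
    show "real N * star_discrepancy s N (\<lambda>n i. alg2_coord psi C lam (qadic_add_nat CARD('f) n alpha) i)
          \<le> c * ln (real N) ^ s"
    proof -
      have "c * ln (real N) ^ s = K0 ^ s * (2 * q ^ t) * ln (real N) ^ s + 2 * real s * (1 / ln 2) ^ s * ln (real N) ^ s"
        unfolding c_def by (simp only: distrib_right)
      then show ?thesis using D b2 b3 by linarith
    qed
  qed
qed

end

theorem corollary2:
  fixes s t :: nat
    and T :: "nat \<Rightarrow> nat"
    and C :: "nat \<Rightarrow> nat \<Rightarrow> nat \<Rightarrow> 'f::{finite,field}"
    and alpha :: "nat \<Rightarrow> nat"
    and psi :: "nat \<Rightarrow> nat \<Rightarrow> 'f"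
    and lam :: "nat \<Rightarrow> nat \<Rightarrow> 'f \<Rightarrow> nat"
  assumes "s \<ge> 1"
    and "\<And>m. T m \<le> min m t"
    and "\<And>i. i \<in> {1..s} \<Longrightarrow> finite_row (C i)"
    and "\<And>m d. m > T m \<Longrightarrow> 1 \<le> (\<Sum>i=1..s. d i) \<Longrightarrow> (\<Sum>i=1..s. d i) \<le> m - T m
           \<Longrightarrow> rows_lin_indep s C m d"
    and "qadic CARD('f) alpha"
    and "\<And>r. bij_betw (psi r) {0..<CARD('f)} UNIV"
    and "\<And>i j. i \<in> {1..s} \<Longrightarrow> j \<ge> 1 \<Longrightarrow> bij_betw (lam i j) UNIV {0..<CARD('f)}"
  shows "\<exists>c. \<forall>N\<ge>2. real N * star_discrepancy s N
            (\<lambda>n i. alg2_coord psi C lam (qadic_add_nat CARD('f) n alpha) i)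
          \<le> c * ln (real N) ^ s"
proof -
  interpret A: alg2_setup s t T C alpha psi lam
    by (rule alg2_setup.intro) (use assms in auto)
  show ?thesis by (rule A.final)
qed



end
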